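(* Let $A\subset\mathcal R$ be a closed zone with $w(A)=w$. Then there exist a finite Puiseux series $p(y)=a_1y^{r_1}+\cdots+a_ny^{r_n}$ with $r_i$ positive rationals, $r_1<\cdots<r_n<\frac1w$, real numbers $c_1<c_2$, and two Puiseux series $$\alpha_1=p(y)+c_1y^{\frac1w}+\mathrm{h.o.t.}_{>\frac1w}\in A,\qquad \alpha_2=p(y)+c_2y^{\frac1w}+\mathrm{h.o.t.}_{>\frac1w}\in A.$$ Moreover, for every $c$ with $c_1<c<c_2$, every Puiseux series (arc in $\mathcal R$) of the form $\alpha=p(y)+cy^{\frac1w}+\mathrm{h.o.t.}_{>\frac1w}$ lies in $A$.
   Context: Let $\mathcal R$ be the set of germs at $0$ of analytic arcs $\{x=\alpha(y),\ y\ge 0\}$ in the closed upper half-plane of $\mathbb R^2$, where $\alpha$ is given by a convergent Puiseux series $\alpha(y)=\sum_i c_iy^{p_i}$ with positive rational exponents $p_1<p_2<\cdots$. The order $\mathcal O(\gamma)$ of a Puiseux series is the smallest exponent with nonzero coefficient ($\mathcal O(0)=+\infty$). Write $\alpha<\beta$ if $\alpha(y)<\beta(y)$ for all sufficiently small $y>0$. A subset $A\subset\mathcal R$ is a zone if $\alpha,\beta\in A$, $\alpha<\gamma<\beta$, $\gamma\in\mathcal R$ imply $\gamma\in A$. Distance $d(\alpha,\beta)=1/\mathcal O(\alpha-\beta)$ (with $1/\infty=0$); width $w(A)=\sup\{d(\alpha,\beta):\alpha,\beta\in A\}$. A zone is closed if there exist $\alpha,\beta\in A$ with $d(\alpha,\beta)=w(A)$,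 and open otherwise. $\mathrm{h.o.t.}_{>r}$ denotes a sum of nonzero terms of order strictly greater than $r$. *)

theory Defs
  imports "HOL-Analysis.Analysis"
begin

text \<open>A Puiseux series is represented by its coefficient function
  c :: rat => real (c q is the coefficient of y^q).  It is a convergent
  Puiseux series with positive rational exponents if there is a common
  denominator N > 0 such that all exponents with nonzero coefficient are of
  the form k/N with k >= 1 and the power series in t = y^(1/N) has positive
  radius of convergence.\<close>

definition puiseux_den :: "(rat \<Rightarrow> real) \<Rightarrow> nat \<Rightarrow> bool" where
  "puiseux_den c N \<longleftrightarrow> N > 0 \<and>
     (\<forall>q. c q \<noteq> 0 \<longrightarrow> q > 0 \<and> (\<exists>k::nat. q = of_nat k / of_nat N)) \<and>
     (\<exists>r::real. r > 0 \<and> summable (\<lambda>k. \<bar>c (of_nat k / of_nat N)\<bar> * r ^ k))"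

definition is_puiseux :: "(rat \<Rightarrow> real) \<Rightarrow> bool" where
  "is_puiseux c \<longleftrightarrow> (\<exists>N. puiseux_den c N)"

text \<open>The set R of arcs (germs), identified with their Puiseux series.\<close>
definition arcs :: "(rat \<Rightarrow> real) set" where
  "arcs = {c. is_puiseux c}"

definition puiseux_eval :: "(rat \<Rightarrow> real) \<Rightarrow> real \<Rightarrow> real" where
  "puiseux_eval c y = (\<Sum>\<^sub>\<infinity>q\<in>UNIV. c q * y powr (of_rat q))"

definition arc_less :: "(rat \<Rightarrow> real) \<Rightarrow> (rat \<Rightarrow> real) \<Rightarrow> bool" where
  "arc_less a b \<longleftrightarrow> (\<exists>\<epsilon>>0. \<forall>y. 0 < y \<and> y < \<epsilon> \<longrightarrow> puiseux_eval a y < puiseux_eval b y)"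

definition puiseux_order :: "(rat \<Rightarrow> real) \<Rightarrow> real" where
  "puiseux_order c = Inf {of_rat q | q. c q \<noteq> 0}"

definition arc_dist :: "(rat \<Rightarrow> real) \<Rightarrow> (rat \<Rightarrow> real) \<Rightarrow> real" where
  "arc_dist a b = (if (\<forall>q. a q = b q) then 0 else 1 / puiseux_order (\<lambda>q. a q - b q))"

definition is_zone :: "(rat \<Rightarrow> real) set \<Rightarrow> bool" where
  "is_zone A \<longleftrightarrow> A \<subseteq> arcs \<and>
     (\<forall>a b g. a \<in> A \<longrightarrow> b \<in> A \<longrightarrow> g \<in> arcs \<longrightarrow> arc_less a g \<longrightarrow> arc_less g b \<longrightarrow> g \<in> A)"

definition zone_width :: "(rat \<Rightarrow> real) set \<Rightarrow> ereal" where
  "zone_width A = Sup {ereal (arc_dist a b) | a b. a \<in> A \<and> b \<in> A}"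

definition closed_zone :: "(rat \<Rightarrow> real) set \<Rightarrow> bool" where
  "closed_zone A \<longleftrightarrow> is_zone A \<and> (\<exists>a\<in>A. \<exists>b\<in>A. ereal (arc_dist a b) = zone_width A)"

end

theory Submission imports Defs begin

lemma powr_rat_nat:
  fixes r :: real assumes "r > 0" "N > 0"
  shows "(r ^ N) powr (of_rat (of_nat k / of_nat N)) = r ^ k"
proof -
  have "(r ^ N) powr (of_rat (of_nat k / of_nat N)) = (r powr real N) powr (real k / real N)"
    using assms by (simp add: powr_realpow of_rat_divide)
  also have "\<dots> = r powr (real N * (real k / real N))" by (simp add: powr_powr)
  also have "\<dots> = r ^ k" using assms by (simp add: powr_realpow)
  finally show ?thesis .
qed

lemma rat_summable:
  assumes "puiseux_den c N" "r > 0" "summable (\<lambda>k. \<bar>c (of_nat k / of_nat N)\<bar> * r ^ k)"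
  shows "(\<lambda>q. \<bar>c q\<bar> * (r ^ N) powr of_rat q) summable_on UNIV"
proof -
  define g where "g = (\<lambda>k::nat. (of_nat k / of_nat N :: rat))"
  have N: "N > 0" using assms(1) unfolding puiseux_den_def by auto
  have inj: "inj g" unfolding g_def inj_def using N by (auto simp: divide_simps)
  let ?F = "\<lambda>q. \<bar>c q\<bar> * (r ^ N) powr of_rat q"
  have eq: "(?F \<circ> g) = (\<lambda>k. \<bar>c (of_nat k / of_nat N)\<bar> * r ^ k)"
    using powr_rat_nat[OF assms(2) N] by (auto simp: g_def)
  have "(?F \<circ> g) summable_on UNIV"
    unfolding eq
    by (rule norm_summable_imp_summable_on) (use assms(3) assms(2) in simp)
  then have "?F summable_on range g" using summable_on_reindex[OF inj] by blast
  moreover have "?F q = 0" if "q \<notin> range g" for q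
  proof -
    have "c q = 0" using assms(1) that unfolding puiseux_den_def g_def by auto
    then show ?thesis by simp
  qed
  ultimately show ?thesis
    by (subst summable_on_cong_neutral[where T="range g" and g = ?F]) auto
qed

lemma tail:
  assumes "is_puiseux c" "\<epsilon> > 0"
  shows "\<exists>\<delta>>0. \<forall>y. 0<y \<and> y<\<delta> \<longrightarrow> (\<lambda>q. c q * y powr of_rat q) summable_on UNIV \<and>
     (\<lambda>q. if q0 < q then \<bar>c q\<bar> * y powr of_rat q else 0) summable_on UNIV \<and>
     infsum (\<lambda>q. if q0 < q then \<bar>c q\<bar> * y powr of_rat q else 0) UNIV \<le> \<epsilon> * y powr of_rat q0"
proof -
  obtain N r where den: "puiseux_den c N" and r: "r > 0"
    and sr: "summable (\<lambda>k. \<bar>c (of_nat k / of_nat N)\<bar> * r ^ k)"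
    using assms(1) unfolding is_puiseux_def puiseux_den_def by blast
  have N: "N > 0" using den unfolding puiseux_den_def by auto
  define R where "R = r ^ N"
  have R: "R > 0" using r by (simp add: R_def)
  define F where "F = (\<lambda>q. \<bar>c q\<bar> * R powr of_rat q)"
  have Fs: "F summable_on UNIV" unfolding F_def R_def by (rule rat_summable[OF den r sr])
  define S where "S = infsum F UNIV"
  have S: "S \<ge> 0" unfolding S_def F_def by (rule infsum_nonneg) simp
  define q1 :: rat where "q1 = of_int (\<lfloor>q0 * of_nat N\<rfloor> + 1) / of_nat N"
  have q1gt: "q0 < q1"
  proof -
    have "q0 * of_nat N < of_int (\<lfloor>q0 * of_nat N\<rfloor> + 1)" by linarith
    then show ?thesis using N unfolding q1_def by (simp add: field_simps)
  qed
  have supp: "q1 \<le> q" if hq: "c q \<noteq> 0" "q0 < q" for q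
  proof -
    obtain k :: nat where k: "q = of_nat k / of_nat N"
      using den hq unfolding puiseux_den_def by blast
    have "q0 * of_nat N < of_nat k" using hq(2) N k by (simp add: field_simps)
    then have "\<lfloor>q0 * of_nat N\<rfloor> < int k" by (simp add: floor_less_iff)
    then have "\<lfloor>q0 * of_nat N\<rfloor> + 1 \<le> int k" by linarith
    then have "(of_int (\<lfloor>q0 * of_nat N\<rfloor> + 1) :: rat) \<le> of_nat k"
      by (metis of_int_le_iff of_int_of_nat_eq)
    then show ?thesis using N k unfolding q1_def by (simp add: divide_right_mono)
  qed
  have cpos: "q > 0" if "c q \<noteq> 0" for q using den that unfolding puiseux_den_def by auto
  define s where "s = of_rat q1 - (of_rat q0 :: real)"
  have s: "s > 0" using q1gt unfolding s_def by (simp add: of_rat_less)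
  define K where "K = \<epsilon> * R powr of_rat q1 / (S + 1)"
  have K: "K > 0" unfolding K_def using assms(2) S R by simp
  define \<delta> where "\<delta> = min R (K powr (1/s))"
  have \<delta>: "\<delta> > 0" unfolding \<delta>_def using R K by simp
  have main: "(\<lambda>q. c q * y powr of_rat q) summable_on UNIV \<and>
     (\<lambda>q. if q0 < q then \<bar>c q\<bar> * y powr of_rat q else 0) summable_on UNIV \<and>
     infsum (\<lambda>q. if q0 < q then \<bar>c q\<bar> * y powr of_rat q else 0) UNIV \<le> \<epsilon> * y powr of_rat q0"
    if y: "0 < y" "y < \<delta>" for y
  proof -
    have yR: "y \<le> R" using y unfolding \<delta>_def by simp
    have b1: "\<bar>c q\<bar> * y powr of_rat q \<le> F q" for q
    proof (cases "c q = 0")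
      case False
      then have "q > 0" by (rule cpos)
      then have "y powr of_rat q \<le> R powr of_rat q" using y yR by (intro powr_mono2) auto
      then show ?thesis unfolding F_def by (simp add: mult_left_mono)
    qed (simp add: F_def)
    have Fa: "(\<lambda>x. norm (F x)) summable_on UNIV" by (rule summable_on_iff_abs_summable_on_real[THEN iffD1, OF Fs])
    have s1: "(\<lambda>q. c q * y powr of_rat q) summable_on UNIV"
      apply (rule summable_on_iff_abs_summable_on_real[THEN iffD2])
      by (rule Infinite_Sum.abs_summable_on_comparison_test[OF Fa])
         (use b1 y in \<open>auto simp: abs_mult F_def\<close>)
    have s2: "(\<lambda>q. if q0 < q then \<bar>c q\<bar> * y powr of_rat q else 0) summable_on UNIV"
      apply (rule summable_on_iff_abs_summable_on_real[THEN iffD2])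
      by (rule Infinite_Sum.abs_summable_on_comparison_test[OF Fa])
         (use b1 y in \<open>auto simp: abs_mult F_def\<close>)
    define C where "C = y powr of_rat q1 / R powr of_rat q1"
    have C: "C \<ge> 0" unfolding C_def by simp
    have b2: "(if q0 < q then \<bar>c q\<bar> * y powr of_rat q else 0) \<le> C * F q" for q
    proof (cases "c q \<noteq> 0 \<and> q0 < q")
      case True
      then have "q1 \<le> q" using supp by blast
      then have d: "0 \<le> of_rat q - (of_rat q1 :: real)" by (simp add: of_rat_less_eq)
      have "y powr of_rat q = y powr of_rat q1 * y powr (of_rat q - of_rat q1)"
        using y by (simp add: powr_add[symmetric])
      also have "\<dots> \<le> y powr of_rat q1 * R powr (of_rat q - of_rat q1)"
        using y yR d by (intro mult_left_mono powr_mono2) auto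
      also have "\<dots> = C * R powr of_rat q"
        unfolding C_def using R by (simp add: powr_diff)
      finally have "y powr of_rat q \<le> C * R powr of_rat q" .
      then show ?thesis using True unfolding F_def
        by (simp add: mult_left_mono mult.left_commute)
    next
      case False
      then show ?thesis using C unfolding F_def by auto
    qed
    have "infsum (\<lambda>q. if q0 < q then \<bar>c q\<bar> * y powr of_rat q else 0) UNIV \<le> infsum (\<lambda>q. C * F q) UNIV"
      by (rule infsum_mono[OF s2 summable_on_cmult_right[OF Fs] b2])
    also have "\<dots> = C * S" unfolding S_def by (rule infsum_cmult_right[OF Fs])
    also have "\<dots> \<le> \<epsilon> * y powr of_rat q0"
    proof -
      have ys: "y powr s \<le> K"
      proof -
        have "y \<le> K powr (1/s)" using y unfolding \<delta>_def by simp
        then have "y powr s \<le> (K powr (1/s)) powr s" using y s by (intro powr_mono2) auto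
        also have "\<dots> = K" using s K by (simp add: powr_powr)
        finally show ?thesis .
      qed
      have "C = y powr of_rat q0 * y powr s / R powr of_rat q1"
        unfolding C_def s_def by (simp add: powr_add[symmetric])
      then have "C * S = y powr of_rat q0 * (y powr s * S / R powr of_rat q1)" by simp
      also have "\<dots> \<le> y powr of_rat q0 * (K * S / R powr of_rat q1)"
        using ys S R by (intro mult_left_mono divide_right_mono mult_right_mono) auto
      also have "K * S / R powr of_rat q1 = \<epsilon> * (S / (S+1))"
      proof -
        have aux: "(\<epsilon> * P / (S+1)) * S / P = \<epsilon> * (S/(S+1))" if "P > 0" for P :: real
          using that S by (simp add: divide_simps)
        show ?thesis unfolding K_def by (rule aux) (use R in simp)
      qed
      also have "\<dots> \<le> \<epsilon>" using S assms(2) by (simp add: divide_simps)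
      finally show ?thesis using y by (simp add: mult_left_mono mult.commute)
    qed
    finally show ?thesis using s1 s2 by blast
  qed
  show ?thesis using \<delta> main by blast
qed

lemma key:
  assumes cP: "is_puiseux c" and dP: "is_puiseux d"
    and eq: "\<And>q. q < q0 \<Longrightarrow> c q = d q" and lt: "c q0 < d q0"
  shows "arc_less c d"
proof -
  define D where "D = d q0 - c q0"
  have D: "D > 0" using lt unfolding D_def by simp
  obtain \<delta>c where \<delta>c: "\<delta>c > 0" and hc: "\<forall>y. 0<y \<and> y<\<delta>c \<longrightarrow> (\<lambda>q. c q * y powr of_rat q) summable_on UNIV \<and>
     (\<lambda>q. if q0 < q then \<bar>c q\<bar> * y powr of_rat q else 0) summable_on UNIV \<and>
     infsum (\<lambda>q. if q0 < q then \<bar>c q\<bar> * y powr of_rat q else 0) UNIV \<le> (D/4) * y powr of_rat q0"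
    using tail[OF cP, of "D/4" q0] D by auto
  obtain \<delta>d where \<delta>d: "\<delta>d > 0" and hd: "\<forall>y. 0<y \<and> y<\<delta>d \<longrightarrow> (\<lambda>q. d q * y powr of_rat q) summable_on UNIV \<and>
     (\<lambda>q. if q0 < q then \<bar>d q\<bar> * y powr of_rat q else 0) summable_on UNIV \<and>
     infsum (\<lambda>q. if q0 < q then \<bar>d q\<bar> * y powr of_rat q else 0) UNIV \<le> (D/4) * y powr of_rat q0"
    using tail[OF dP, of "D/4" q0] D by auto
  have "puiseux_eval c y < puiseux_eval d y" if y: "0 < y" "y < min \<delta>c \<delta>d" for y
  proof -
    define fc where "fc = (\<lambda>q. c q * y powr of_rat q)"
    define fd where "fd = (\<lambda>q. d q * y powr of_rat q)"
    define tc where "tc = (\<lambda>q. if q0 < q then \<bar>c q\<bar> * y powr of_rat q else 0)"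
    define td where "td = (\<lambda>q. if q0 < q then \<bar>d q\<bar> * y powr of_rat q else 0)"
    have sc: "fc summable_on UNIV" and stc: "tc summable_on UNIV"
      and btc: "infsum tc UNIV \<le> (D/4) * y powr of_rat q0"
      using hc y unfolding fc_def tc_def by auto
    have sd: "fd summable_on UNIV" and std: "td summable_on UNIV"
      and btd: "infsum td UNIV \<le> (D/4) * y powr of_rat q0"
      using hd y unfolding fd_def td_def by auto
    define h1 where "h1 = (\<lambda>q. if q = q0 then D * y powr of_rat q0 else (0::real))"
    define h2 where "h2 = (\<lambda>q. if q0 < q then fd q - fc q else 0)"
    have split: "fd q + - fc q = h1 q + h2 q" for q
    proof -
      consider "q < q0" | "q = q0" | "q0 < q" by fastforce
      then show ?thesis
        by cases (auto simp: h1_def h2_def fc_def fd_def D_def eq algebra_simps)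
    qed
    have h1s: "h1 summable_on UNIV"
      by (subst summable_on_cong_neutral[where T="{q0}" and g=h1]) (auto simp: h1_def)
    have h1i: "infsum h1 UNIV = D * y powr of_rat q0"
      by (subst infsum_cong_neutral[where T="{q0}" and g=h1]) (auto simp: h1_def)
    have bnd: "norm (h2 q) \<le> norm (tc q + td q)" for q
    proof -
      have p: "y powr of_rat q \<ge> 0" by simp
      have "\<bar>d q * y powr of_rat q - c q * y powr of_rat q\<bar> = \<bar>d q - c q\<bar> * y powr of_rat q"
        by (simp add: left_diff_distrib[symmetric] abs_mult)
      also have "\<dots> \<le> (\<bar>c q\<bar> + \<bar>d q\<bar>) * y powr of_rat q"
        by (rule mult_right_mono[OF _ p]) linarith
      finally show ?thesis unfolding h2_def tc_def td_def fc_def fd_def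
        by (auto simp: algebra_simps)
    qed
    have tcs: "(\<lambda>q. tc q + td q) summable_on UNIV" by (rule summable_on_add[OF stc std])
    have tcn: "(\<lambda>q. norm (tc q + td q)) summable_on UNIV"
      by (rule summable_on_iff_abs_summable_on_real[THEN iffD1, OF tcs])
    have h2a: "(\<lambda>q. norm (h2 q)) summable_on UNIV"
      by (rule Infinite_Sum.abs_summable_on_comparison_test[OF tcn bnd])
    have h2s: "h2 summable_on UNIV"
      by (rule summable_on_iff_abs_summable_on_real[THEN iffD2, OF h2a])
    have "norm (infsum h2 UNIV) \<le> infsum (\<lambda>q. norm (h2 q)) UNIV"
      by (rule norm_infsum_bound[OF h2a])
    also have "\<dots> \<le> infsum (\<lambda>q. tc q + td q) UNIV"
      by (rule infsum_mono[OF h2a tcs]) (use bnd in \<open>auto simp: tc_def td_def\<close>)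
    also have "\<dots> = infsum tc UNIV + infsum td UNIV" by (rule infsum_add[OF stc std])
    finally have h2b: "\<bar>infsum h2 UNIV\<bar> \<le> (D/2) * y powr of_rat q0" using btc btd by simp
    have "puiseux_eval d y - puiseux_eval c y = infsum fd UNIV + infsum (\<lambda>q. - fc q) UNIV"
      unfolding puiseux_eval_def fc_def fd_def by (simp add: infsum_uminus)
    also have "\<dots> = infsum (\<lambda>q. fd q + - fc q) UNIV"
      by (rule infsum_add[symmetric, OF sd summable_on_uminus[THEN iffD2, OF sc]])
    also have "\<dots> = infsum (\<lambda>q. h1 q + h2 q) UNIV" using split by presburger
    also have "\<dots> = D * y powr of_rat q0 + infsum h2 UNIV"
      by (simp add: infsum_add[OF h1s h2s] h1i)
    finally have "puiseux_eval d y - puiseux_eval c y = D * y powr of_rat q0 + infsum h2 UNIV" .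
    moreover have "D * y powr of_rat q0 > 0" using y D by simp
    ultimately show ?thesis using h2b by linarith
  qed
  then show ?thesis unfolding arc_less_def using \<delta>c \<delta>d
    by (intro exI[of _ "min \<delta>c \<delta>d"]) auto
qed

lemma build:
  fixes A :: "(rat \<Rightarrow> real) set" and w :: real
  assumes Z: "is_zone A" and aA: "a \<in> A" and bA: "b \<in> A"
    and lt: "a q0 < b q0" and eqb: "\<And>q. q < q0 \<Longrightarrow> a q = b q"
    and q0w: "of_rat q0 = 1 / w"
  shows "\<exists>(p :: rat \<Rightarrow> real) (q0 :: rat) (c1 :: real) (c2 :: real) \<alpha>1 \<alpha>2.
           finite {q. p q \<noteq> 0} \<and>
           (\<forall>q. p q \<noteq> 0 \<longrightarrow> 0 < q \<and> of_rat q < 1 / w) \<and>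
           of_rat q0 = 1 / w \<and>
           c1 < c2 \<and>
           \<alpha>1 \<in> A \<and> (\<forall>q. of_rat q < 1 / w \<longrightarrow> \<alpha>1 q = p q) \<and> \<alpha>1 q0 = c1 \<and>
           \<alpha>2 \<in> A \<and> (\<forall>q. of_rat q < 1 / w \<longrightarrow> \<alpha>2 q = p q) \<and> \<alpha>2 q0 = c2 \<and>
           (\<forall>c \<alpha>. c1 < c \<and> c < c2 \<and> \<alpha> \<in> arcs \<and>
               (\<forall>q. of_rat q < 1 / w \<longrightarrow> \<alpha> q = p q) \<and> \<alpha> q0 = c \<longrightarrow> \<alpha> \<in> A)"
proof -
  have arcsA: "A \<subseteq> arcs" using Z unfolding is_zone_def by blast
  have aP: "is_puiseux a" and bP: "is_puiseux b" using aA bA arcsA unfolding arcs_def by auto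
  obtain Na where den: "puiseux_den a Na" using aP unfolding is_puiseux_def by blast
  have Na: "Na > 0" using den unfolding puiseux_den_def by auto
  define p where "p = (\<lambda>q. if q < q0 then a q else 0)"
  have lt_iff: "of_rat q < 1 / w \<longleftrightarrow> q < q0" for q
    using q0w by (metis of_rat_less)
  define M where "M = nat \<lceil>q0 * of_nat Na\<rceil>"
  have fin: "finite {q. p q \<noteq> 0}"
  proof (rule finite_subset)
    show "{q. p q \<noteq> 0} \<subseteq> (\<lambda>k. of_nat k / of_nat Na) ` {..M}"
    proof
      fix q assume "q \<in> {q. p q \<noteq> 0}"
      then have aq: "a q \<noteq> 0" and qq: "q < q0" unfolding p_def by (auto split: if_splits)
      obtain k :: nat where k: "q = of_nat k / of_nat Na"
        using den aq unfolding puiseux_den_def by blast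
      have "of_nat k < q0 * of_nat Na" using qq k Na by (simp add: field_simps)
      then have "of_nat k \<le> q0 * of_nat Na" by simp
      then have "int k \<le> \<lceil>q0 * of_nat Na\<rceil>"
        by (metis ceiling_mono ceiling_of_nat)
      then have "k \<le> M" unfolding M_def by linarith
      then show "q \<in> (\<lambda>k. of_nat k / of_nat Na) ` {..M}" using k by auto
    qed
  qed simp
  have ppos: "\<forall>q. p q \<noteq> 0 \<longrightarrow> 0 < q \<and> of_rat q < 1 / w"
  proof (intro allI impI)
    fix q assume "p q \<noteq> 0"
    then have aq: "a q \<noteq> 0" and qq: "q < q0" unfolding p_def by (auto split: if_splits)
    then show "0 < q \<and> of_rat q < 1 / w" using den lt_iff unfolding puiseux_den_def by auto
  qed
  have a_p: "\<forall>q. of_rat q < 1 / w \<longrightarrow> a q = p q" using lt_iff unfolding p_def by auto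
  have b_p: "\<forall>q. of_rat q < 1 / w \<longrightarrow> b q = p q" using lt_iff eqb unfolding p_def by auto
  have last: "\<forall>c \<alpha>. a q0 < c \<and> c < b q0 \<and> \<alpha> \<in> arcs \<and>
               (\<forall>q. of_rat q < 1 / w \<longrightarrow> \<alpha> q = p q) \<and> \<alpha> q0 = c \<longrightarrow> \<alpha> \<in> A"
  proof (intro allI impI)
    fix c \<alpha> assume h: "a q0 < c \<and> c < b q0 \<and> \<alpha> \<in> arcs \<and>
               (\<forall>q. of_rat q < 1 / w \<longrightarrow> \<alpha> q = p q) \<and> \<alpha> q0 = c"
    have alP: "is_puiseux \<alpha>" using h unfolding arcs_def by auto
    have e1: "a q = \<alpha> q" if "q < q0" for q using h that lt_iff unfolding p_def by auto
    have e2: "\<alpha> q = b q" if "q < q0" for q using e1[OF that] eqb[OF that] by simp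
    have "arc_less a \<alpha>" by (rule key[OF aP alP e1]) (use h in auto)
    moreover have "arc_less \<alpha> b" by (rule key[OF alP bP e2]) (use h in auto)
    ultimately show "\<alpha> \<in> A" using Z aA bA h unfolding is_zone_def by blast
  qed
  show ?thesis
    apply (rule exI[of _ p], rule exI[of _ q0], rule exI[of _ "a q0"], rule exI[of _ "b q0"],
           rule exI[of _ a], rule exI[of _ b])
    using fin ppos q0w lt aA bA a_p b_p last by blast
qed

theorem lemma5p2:
  fixes A :: "(rat \<Rightarrow> real) set" and w :: real
  assumes "closed_zone A"
    and "zone_width A = ereal w"
    and "w > 0"
  shows "\<exists>(p :: rat \<Rightarrow> real) (q0 :: rat) (c1 :: real) (c2 :: real) \<alpha>1 \<alpha>2.
           finite {q. p q \<noteq> 0} \<and>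
           (\<forall>q. p q \<noteq> 0 \<longrightarrow> 0 < q \<and> of_rat q < 1 / w) \<and>
           of_rat q0 = 1 / w \<and>
           c1 < c2 \<and>
           \<alpha>1 \<in> A \<and> (\<forall>q. of_rat q < 1 / w \<longrightarrow> \<alpha>1 q = p q) \<and> \<alpha>1 q0 = c1 \<and>
           \<alpha>2 \<in> A \<and> (\<forall>q. of_rat q < 1 / w \<longrightarrow> \<alpha>2 q = p q) \<and> \<alpha>2 q0 = c2 \<and>
           (\<forall>c \<alpha>. c1 < c \<and> c < c2 \<and> \<alpha> \<in> arcs \<and>
               (\<forall>q. of_rat q < 1 / w \<longrightarrow> \<alpha> q = p q) \<and> \<alpha> q0 = c \<longrightarrow> \<alpha> \<in> A)"
proof -
  have Z: "is_zone A" using assms(1) unfolding closed_zone_def by blast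
  obtain a b where aA: "a \<in> A" and bA: "b \<in> A" and ab: "ereal (arc_dist a b) = zone_width A"
    using assms(1) unfolding closed_zone_def by blast
  have dist: "arc_dist a b = w" using ab assms(2) by simp
  have arcsA: "A \<subseteq> arcs" using Z unfolding is_zone_def by blast
  have aP: "is_puiseux a" and bP: "is_puiseux b" using aA bA arcsA unfolding arcs_def by auto
  obtain Na where dena: "puiseux_den a Na" using aP unfolding is_puiseux_def by blast
  obtain Nb where denb: "puiseux_den b Nb" using bP unfolding is_puiseux_def by blast
  have Na: "Na > 0" using dena unfolding puiseux_den_def by auto
  have Nb: "Nb > 0" using denb unfolding puiseux_den_def by auto
  define N where "N = Na * Nb"
  define e where "e = (\<lambda>q. a q - b q)"
  have ne: "\<not> (\<forall>q. a q = b q)"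
  proof
    assume "\<forall>q. a q = b q"
    then have "arc_dist a b = 0" unfolding arc_dist_def by simp
    then show False using dist assms(3) by simp
  qed
  then have "1 / puiseux_order e = w" using dist ne unfolding arc_dist_def e_def by presburger
  then have ord: "puiseux_order e = 1 / w" using assms(3) by (auto simp: field_simps)
  have eN: "\<exists>k::nat. q = of_nat k / of_nat N" if "e q \<noteq> 0" for q
  proof -
    have "a q \<noteq> 0 \<or> b q \<noteq> 0" using that unfolding e_def by auto
    then show ?thesis
    proof
      assume "a q \<noteq> 0"
      then obtain k :: nat where k: "q = of_nat k / of_nat Na"
        using dena unfolding puiseux_den_def by blast
      have "q = of_nat (k * Nb) / of_nat N" using k Nb unfolding N_def by (simp add: field_simps)
      then show ?thesis by blast
    next
      assume "b q \<noteq> 0"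
      then obtain k :: nat where k: "q = of_nat k / of_nat Nb"
        using denb unfolding puiseux_den_def by blast
      have "q = of_nat (k * Na) / of_nat N" using k Na unfolding N_def by (simp add: field_simps)
      then show ?thesis by blast
    qed
  qed
  obtain q' where q': "e q' \<noteq> 0" using ne unfolding e_def by auto
  obtain k' :: nat where k': "q' = of_nat k' / of_nat N" using eN[OF q'] by blast
  define k0 where "k0 = (LEAST k::nat. e (of_nat k / of_nat N) \<noteq> 0)"
  define q0 :: rat where "q0 = of_nat k0 / of_nat N"
  have N: "N > 0" using Na Nb unfolding N_def by simp
  have eq0: "e q0 \<noteq> 0" unfolding q0_def k0_def
    by (rule LeastI[of _ k']) (use q' k' in simp)
  have minq: "q0 \<le> q" if hq: "e q \<noteq> 0" for q
  proof -
    obtain k :: nat where k: "q = of_nat k / of_nat N" using eN[OF hq] by blast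
    have "k0 \<le> k" unfolding k0_def by (rule Least_le) (use hq k in simp)
    then show ?thesis unfolding q0_def k using N by (simp add: divide_right_mono)
  qed
  have "puiseux_order e = of_rat q0"
    unfolding puiseux_order_def
    by (rule cInf_eq_minimum) (use eq0 minq in \<open>auto simp: of_rat_less_eq\<close>)
  then have q0w: "of_rat q0 = 1 / w" using ord by simp
  have eqb: "a q = b q" if "q < q0" for q
    using minq[of q] that unfolding e_def by force
  have "a q0 \<noteq> b q0" using eq0 unfolding e_def by simp
  then consider "a q0 < b q0" | "b q0 < a q0" by linarith
  then show ?thesis
  proof cases
    case 1
    show ?thesis by (rule build[OF Z aA bA 1 eqb q0w])
  next
    case 2
    show ?thesis by (rule build[OF Z bA aA 2 eqb[symmetric] q0w])
  qed
qed

end
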